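(* On any non-atomic probability space $(\mathbb{X},\mathcal{X},\mu)$ with an invertible measure-preserving ergodic transformation $T$, there exists a finite measurable function $f:\mathbb{X}\to\mathbb{R}$ such that, $\mu$-a.e., $$\limsup_n A_n^+f=+\infty,\qquad \liminf_n A_n^+f=-\infty,\qquad \lim_n A_n^-f=+\infty.$$
   Context: For measurable $f:\mathbb{X}\to\mathbb{R}$ and $n\ge1$: $A_n^+f=\frac1n\sum_{i=0}^{n-1}f\circ T^i$ and $A_n^-f=\frac1n\sum_{i=0}^{n-1}f\circ T^{-i}$. *)

theory Defs
  imports "HOL-Probability.Probability"
begin

definition non_atomic :: "'a measure \<Rightarrow> bool" where
  "non_atomic M \<longleftrightarrow> (\<forall>A\<in>sets M. measure M A > 0 \<longrightarrow>
      (\<exists>B\<in>sets M. B \<subseteq> A \<and> 0 < measure M B \<and> measure M B < measure M A))"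

definition measure_preserving_map :: "'a measure \<Rightarrow> ('a \<Rightarrow> 'a) \<Rightarrow> bool" where
  "measure_preserving_map M T \<longleftrightarrow> T \<in> M \<rightarrow>\<^sub>M M \<and> distr M M T = M"

definition invertible_map :: "'a measure \<Rightarrow> ('a \<Rightarrow> 'a) \<Rightarrow> bool" where
  "invertible_map M T \<longleftrightarrow> bij_betw T (space M) (space M) \<and>
      inv_into (space M) T \<in> M \<rightarrow>\<^sub>M M"

definition ergodic_map :: "'a measure \<Rightarrow> ('a \<Rightarrow> 'a) \<Rightarrow> bool" where
  "ergodic_map M T \<longleftrightarrow> (\<forall>A\<in>sets M. T -` A \<inter> space M = A \<longrightarrow>
      measure M A = 0 \<or> measure M A = 1)"

definition avg_plus :: "('a \<Rightarrow> 'a) \<Rightarrow> ('a \<Rightarrow> real) \<Rightarrow> nat \<Rightarrow> 'a \<Rightarrow> real" where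
  "avg_plus T f n x = (\<Sum>i<n. f ((T ^^ i) x)) / real n"

definition avg_minus :: "'a measure \<Rightarrow> ('a \<Rightarrow> 'a) \<Rightarrow> ('a \<Rightarrow> real) \<Rightarrow> nat \<Rightarrow> 'a \<Rightarrow> real" where
  "avg_minus M T f n x = (\<Sum>i<n. f ((inv_into (space M) T ^^ i) x)) / real n"

end

theory Submission
  imports Defs
begin

definition nxt :: "(nat \<Rightarrow> bool) \<Rightarrow> nat \<Rightarrow> nat" where
  "nxt a i = (LEAST j. i \<le> j \<and> a j)"

lemma nxt_prop: assumes "\<forall>i. \<exists>j\<ge>i. a j"
  shows "i \<le> nxt a i" "a (nxt a i)" "\<And>j. i \<le> j \<Longrightarrow> a j \<Longrightarrow> nxt a i \<le> j"
proof -
  obtain j where "j \<ge> i" "a j" using assms by blast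
  then have "i \<le> (LEAST j. i \<le> j \<and> a j) \<and> a (LEAST j. i \<le> j \<and> a j)"
    using LeastI[of "\<lambda>j. i \<le> j \<and> a j" j] by simp
  then show "i \<le> nxt a i" "a (nxt a i)" unfolding nxt_def by auto
  show "\<And>j. i \<le> j \<Longrightarrow> a j \<Longrightarrow> nxt a i \<le> j" unfolding nxt_def by (simp add: Least_le)
qed

lemma tele:
  assumes inf: "\<forall>i. \<exists>j\<ge>i. a j"
  shows "(\<Sum>i<n. (if a i then real (LEAST m. 1 \<le> m \<and> a (i+m)) else 0)) = real (nxt a n) - real (nxt a 0)"
proof (induction n)
  case 0 then show ?case by simp
next
  case (Suc n)
  have key: "real (nxt a (Suc n)) = real (nxt a n) + (if a n then real (LEAST m. 1 \<le> m \<and> a (n+m)) else 0)"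
  proof (cases "a n")
    case True
    have e1: "nxt a n = n" using le_antisym[OF nxt_prop(3)[OF inf order_refl True] nxt_prop(1)[OF inf]] .
    have "(LEAST m. 1 \<le> m \<and> a (n+m)) = nxt a (Suc n) - n"
    proof (rule Least_equality)
      show "1 \<le> nxt a (Suc n) - n \<and> a (n + (nxt a (Suc n) - n))"
        using nxt_prop[OF inf, of "Suc n"] by auto
      fix y assume "1 \<le> y \<and> a (n + y)"
      then have "nxt a (Suc n) \<le> n + y" using nxt_prop(3)[OF inf, of "Suc n" "n+y"] by auto
      then show "nxt a (Suc n) - n \<le> y" by simp
    qed
    moreover have "Suc n \<le> nxt a (Suc n)" using nxt_prop[OF inf] by blast
    ultimately show ?thesis using True e1 by simp
  next
    case False
    have "nxt a (Suc n) = nxt a n"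
    proof (rule le_antisym)
      have "nxt a n \<noteq> n" using nxt_prop(2)[OF inf, of n] False by auto
      then have "Suc n \<le> nxt a n" using nxt_prop(1)[OF inf, of n] by simp
      then show "nxt a (Suc n) \<le> nxt a n" using nxt_prop(2,3)[OF inf] by blast
      show "nxt a n \<le> nxt a (Suc n)" using nxt_prop(1,2,3)[OF inf, of "Suc n"] nxt_prop(3)[OF inf, of n]
        by (meson Suc_leD)
    qed
    then show ?thesis using False by simp
  qed
  show ?case using Suc key by simp
qed

lemma halving:
  assumes P: "prob_space M" and na: "non_atomic M" and A: "A \<in> sets M" "measure M A > 0"
  shows "\<exists>B\<in>sets M. B \<subseteq> A \<and> 0 < measure M B \<and> measure M B \<le> measure M A / 2"
proof -
  interpret prob_space M by (rule P)
  obtain B where B: "B \<in> sets M" "B \<subseteq> A" "0 < measure M B" "measure M B < measure M A"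
    using na A unfolding non_atomic_def by blast
  show ?thesis
  proof (cases "measure M B \<le> measure M A / 2")
    case True then show ?thesis using B by blast
  next
    case False
    have "measure M (A - B) = measure M A - measure M B"
      using finite_measure_Diff[OF A(1) B(1) B(2)] .
    then show ?thesis using False B A by (intro bexI[of _ "A - B"]) auto
  qed
qed

lemma dec_seq:
  assumes P: "prob_space M" and na: "non_atomic M" and A0: "A0 \<in> sets M" "measure M A0 > 0"
  shows "\<exists>B::nat \<Rightarrow> 'a set. (\<forall>k. B k \<in> sets M \<and> B k \<subseteq> A0 \<and> 0 < measure M (B k) \<and> B (Suc k) \<subseteq> B k)
     \<and> (\<forall>z. \<exists>k. z \<notin> B k)"
proof -
  interpret prob_space M by (rule P)
  have "\<forall>A. \<exists>B. (A \<in> sets M \<and> measure M A > 0) \<longrightarrow> (B\<in>sets M \<and> B \<subseteq> A \<and> 0 < measure M B \<and> measure M B \<le> measure M A / 2)"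
    using halving[OF P na] by blast
  from choice[OF this] obtain h where h': "\<forall>A. (A \<in> sets M \<and> measure M A > 0) \<longrightarrow> (h A\<in>sets M \<and> h A \<subseteq> A \<and> 0 < measure M (h A) \<and> measure M (h A) \<le> measure M A / 2)"
    by blast
  have h: "\<And>A. A \<in> sets M \<Longrightarrow> measure M A > 0 \<Longrightarrow>
      h A \<in> sets M \<and> h A \<subseteq> A \<and> 0 < measure M (h A) \<and> measure M (h A) \<le> measure M A / 2"
    using h' by blast
  define C where "C k = (h ^^ k) A0" for k
  have C: "C k \<in> sets M \<and> 0 < measure M (C k) \<and> measure M (C k) \<le> measure M A0 / 2^k" for k
  proof (induction k)
    case 0 then show ?case using A0 by (simp add: C_def)
  next
    case (Suc k)
    have "C (Suc k) = h (C k)" by (simp add: C_def)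
    have 1: "h (C k) \<in> sets M \<and> h (C k) \<subseteq> C k \<and> 0 < measure M (h (C k)) \<and> measure M (h (C k)) \<le> measure M (C k) / 2"
      using h[of "C k"] Suc by blast
    have "measure M (C k) / 2 \<le> measure M A0 / 2^k / 2" using Suc by (intro divide_right_mono) auto
    then have "measure M (h (C k)) \<le> measure M A0 / 2^Suc k" using 1 by (simp add: divide_divide_eq_left mult.commute)
    then show ?case using 1 \<open>C (Suc k) = h (C k)\<close> by simp
  qed
  have Cdec: "C (Suc k) \<subseteq> C k" for k using h[of "C k"] C[of k] by (simp add: C_def)
  have C0: "C 0 = A0" by (simp add: C_def)
  have Csub: "C k \<subseteq> A0" for k
  proof (induction k)
    case 0 then show ?case by (simp add: C0)
  next
    case (Suc k) then show ?case using Cdec[of k] by blast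
  qed
  define I where "I = (\<Inter>k. C k)"
  have Is: "I \<in> sets M" unfolding I_def using C by blast
  have ICk: "I \<subseteq> C k" for k unfolding I_def by blast
  have "measure M I \<le> measure M A0 / 2^k" for k
    using finite_measure_mono[OF ICk[of k] conjunct1[OF C[of k]]] C[of k] by linarith
  then have "measure M I \<le> 0"
    by (intro LIMSEQ_le_const[OF LIMSEQ_divide_realpow_zero[of 2 "measure M A0"]]) auto
  then have I0: "measure M I = 0" by (simp add: measure_le_0_iff)
  define B where "B k = C k - I" for k
  show ?thesis
  proof (intro exI[of _ B] conjI allI)
    fix k
    show "B k \<in> sets M" unfolding B_def using C Is by blast
    show "B k \<subseteq> A0" unfolding B_def using Csub by blast
    show "0 < measure M (B k)" unfolding B_def using finite_measure_Diff[OF conjunct1[OF C[of k]] Is ICk[of k]] I0 C[of k] by simp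
    show "B (Suc k) \<subseteq> B k" unfolding B_def using Cdec by blast
  next
    fix z
    show "\<exists>k. z \<notin> B k"
    proof (cases "z \<in> I")
      case True then show ?thesis unfolding B_def by blast
    next
      case False then obtain k where "z \<notin> C k" unfolding I_def by blast
      then show ?thesis unfolding B_def by blast
    qed
  qed
qed


lemma funpow_meas: assumes "S \<in> M \<rightarrow>\<^sub>M M" shows "(S^^n) \<in> M \<rightarrow>\<^sub>M M"
proof (induction n)
  case 0 then show ?case by simp
next
  case (Suc n) then show ?case using measurable_comp[OF Suc.IH assms] by (simp add: o_def)
qed

lemma funpow_pres:
  assumes "S \<in> M \<rightarrow>\<^sub>M M" "\<And>U. U \<in> sets M \<Longrightarrow> measure M (S -` U \<inter> space M) = measure M U"
    "U \<in> sets M"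
  shows "measure M ((S^^n) -` U \<inter> space M) = measure M U"
proof (induction n)
  case 0 then show ?case using sets.sets_into_space[OF assms(3)] by (simp add: Int_absorb2)
next
  case (Suc n)
  have sp: "\<And>x. x \<in> space M \<Longrightarrow> S x \<in> space M" using measurable_space[OF assms(1)] by blast
  have eq: "(S^^Suc n) -` U \<inter> space M = S -` ((S^^n) -` U \<inter> space M) \<inter> space M"
    unfolding funpow_Suc_right o_def using sp by auto
  have mem: "(S^^n) -` U \<inter> space M \<in> sets M"
    using funpow_meas[OF assms(1)] assms(3) by (rule measurable_sets)
  show ?case unfolding eq using assms(2)[OF mem] Suc.IH by simp
qed

lemma recurrence:
  assumes P: "prob_space M" and meas: "S \<in> M \<rightarrow>\<^sub>M M"
    and pres: "\<And>U. U \<in> sets M \<Longrightarrow> measure M (S -` U \<inter> space M) = measure M U"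
    and erg: "\<And>A. A \<in> sets M \<Longrightarrow> S -` A \<inter> space M = A \<Longrightarrow> measure M A = 0 \<or> measure M A = 1"
    and A: "A \<in> sets M" and pos: "measure M A > 0"
  shows "AE x in M. \<forall>N. \<exists>n\<ge>N. (S^^n) x \<in> A"
proof -
  interpret prob_space M by (rule P)
  have sp: "\<And>x. x \<in> space M \<Longrightarrow> S x \<in> space M" using measurable_space[OF meas] by blast
  have spn: "\<And>x n. x \<in> space M \<Longrightarrow> (S^^n) x \<in> space M" using measurable_space[OF funpow_meas[OF meas]] by blast
  define W where "W N = (\<Union>n\<in>{N..}. (S^^n) -` A \<inter> space M)" for N
  have Wn: "\<And>n. (S^^n) -` A \<inter> space M \<in> sets M"
    using funpow_meas[OF meas] A by (rule measurable_sets)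
  have Ws: "W N \<in> sets M" for N unfolding W_def using Wn by blast
  have WN: "W N = (S^^N) -` (W 0) \<inter> space M" for N
  proof -
    have "(S^^N) -` (W 0) \<inter> space M = (\<Union>n. (S^^(n+N)) -` A \<inter> space M)"
      unfolding W_def using spn by (auto simp: funpow_add)
    also have "\<dots> = W N" unfolding W_def
    proof (intro equalityI subsetI)
      fix x assume "x \<in> (\<Union>n. (S^^(n+N)) -` A \<inter> space M)"
      then obtain n where "x \<in> space M" "(S^^(n+N)) x \<in> A" by blast
      then show "x \<in> (\<Union>n\<in>{N..}. (S^^n) -` A \<inter> space M)" by (intro UN_I[of "n+N"]) auto
    next
      fix x assume "x \<in> (\<Union>n\<in>{N..}. (S^^n) -` A \<inter> space M)"
      then obtain n where "n \<ge> N" "x \<in> space M" "(S^^n) x \<in> A" by blast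
      then show "x \<in> (\<Union>n. (S^^(n+N)) -` A \<inter> space M)" by (intro UN_I[of "n-N"]) auto
    qed
    finally show ?thesis by (rule sym)
  qed
  have mW: "measure M (W N) = measure M (W 0)" for N
    by (subst WN) (rule funpow_pres[OF meas pres Ws])
  have sub: "W N \<subseteq> W 0" for N unfolding W_def by auto
  have null: "W 0 - W N \<in> null_sets M" for N
  proof -
    have "measure M (W 0 - W N) = 0"
      using finite_measure_Diff[OF Ws Ws sub[of N]] mW[of N] by simp
    moreover have "W 0 - W N \<in> sets M" using Ws by blast
    ultimately show ?thesis by (simp add: null_sets_def emeasure_eq_measure)
  qed
  have ae1: "AE x in M. \<forall>N. x \<in> W 0 \<longrightarrow> x \<in> W N"
    unfolding AE_all_countable
  proof
    fix N show "AE x in M. x \<in> W 0 \<longrightarrow> x \<in> W N"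
      using AE_not_in[OF null[of N]] by auto
  qed
  define E where "E = {x\<in>space M. \<forall>N. \<exists>n\<ge>N. (S^^n) x \<in> A}"
  have EW: "E = (\<Inter>N. W N)" unfolding E_def W_def by (auto simp: Bex_def atLeast_iff; blast)
  have Es: "E \<in> sets M" unfolding EW using Ws by blast
  have Einv: "S -` E \<inter> space M = E"
  proof -
    have "\<And>x. x \<in> space M \<Longrightarrow> (\<forall>N. \<exists>n\<ge>N. (S^^n) (S x) \<in> A) \<longleftrightarrow> (\<forall>N. \<exists>n\<ge>N. (S^^n) x \<in> A)"
    proof -
      fix x
      have "(S^^n) (S x) = (S^^(Suc n)) x" for n by (simp add: funpow_swap1)
      show "(\<forall>N. \<exists>n\<ge>N. (S^^n) (S x) \<in> A) \<longleftrightarrow> (\<forall>N. \<exists>n\<ge>N. (S^^n) x \<in> A)"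
      proof
        assume H: "\<forall>N. \<exists>n\<ge>N. (S^^n) (S x) \<in> A"
        show "\<forall>N. \<exists>n\<ge>N. (S^^n) x \<in> A"
        proof
          fix N obtain n where "n \<ge> N" "(S^^n) (S x) \<in> A" using H by blast
          then show "\<exists>n\<ge>N. (S^^n) x \<in> A" using \<open>\<And>n. (S^^n) (S x) = (S^^(Suc n)) x\<close>
            by (intro exI[of _ "Suc n"]) auto
        qed
      next
        assume H: "\<forall>N. \<exists>n\<ge>N. (S^^n) x \<in> A"
        show "\<forall>N. \<exists>n\<ge>N. (S^^n) (S x) \<in> A"
        proof
          fix N obtain n where n: "n \<ge> Suc N" "(S^^n) x \<in> A" using H by blast
          then obtain m where "n = Suc m" by (cases n) auto
          then show "\<exists>n\<ge>N. (S^^n) (S x) \<in> A" using n \<open>\<And>n. (S^^n) (S x) = (S^^(Suc n)) x\<close>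
            by (intro exI[of _ m]) auto
        qed
      qed
    qed
    then show ?thesis unfolding E_def using sp by auto
  qed
  have "measure M (W 0) \<le> measure M E"
  proof -
    have "AE x in M. x \<in> W 0 \<longrightarrow> x \<in> E" using ae1 unfolding EW by auto
    then have "emeasure M (W 0) \<le> emeasure M E" using Es by (rule emeasure_mono_AE)
    then show ?thesis by (simp add: emeasure_eq_measure)
  qed
  moreover have "measure M A \<le> measure M (W 0)"
  proof -
    have "A \<subseteq> W 0" unfolding W_def using sets.sets_into_space[OF A] by (auto intro!: UN_I[of 0])
    then show ?thesis using Ws by (simp add: finite_measure_mono)
  qed
  ultimately have "measure M E = 1" using erg[OF Es Einv] pos by auto
  then have "AE x in M. x \<in> E" by (rule AE_prob_1)
  then show ?thesis unfolding E_def by auto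
qed




definition hh :: "('a\<Rightarrow>'a) \<Rightarrow> (nat \<Rightarrow> 'a set) \<Rightarrow> nat \<Rightarrow> 'a \<Rightarrow> real" where
  "hh P B k z = (if z \<in> B k then real (LEAST m. 1 \<le> m \<and> (P^^m) z \<in> B k) else 0)"
definition ff :: "('a\<Rightarrow>'a) \<Rightarrow> (nat \<Rightarrow> 'a set) \<Rightarrow> 'a \<Rightarrow> real" where
  "ff P B z = suminf (\<lambda>k. hh P B k z)"
definition WW :: "('a\<Rightarrow>'a) \<Rightarrow> (nat \<Rightarrow> 'a set) \<Rightarrow> (nat \<Rightarrow> 'a set) \<Rightarrow> nat \<Rightarrow> 'a \<Rightarrow> real" where
  "WW P B D j y = real (LEAST m. 1 \<le> m \<and> (P^^m) y \<in> D j)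
      + (\<Sum>i<(LEAST m. 1 \<le> m \<and> (P^^m) y \<in> D j). ff P B ((P^^Suc i) y))"
definition uu :: "('a\<Rightarrow>'a) \<Rightarrow> (nat \<Rightarrow> 'a set) \<Rightarrow> (nat \<Rightarrow> 'a set) \<Rightarrow> 'a \<Rightarrow> real" where
  "uu P B D y = suminf (\<lambda>j. if y \<in> D j then real j * WW P B D j y else 0)"
definition FF :: "('a\<Rightarrow>'a) \<Rightarrow> ('a\<Rightarrow>'a) \<Rightarrow> (nat \<Rightarrow> 'a set) \<Rightarrow> (nat \<Rightarrow> 'a set) \<Rightarrow> 'a \<Rightarrow> real" where
  "FF T P B D z = ff P B z + uu P B D z - uu P B D (T z)"

lemma antimono_sets: assumes "\<And>k. B (Suc k) \<subseteq> B k" "k \<le> k'" shows "B k' \<subseteq> B k"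
  using lift_Suc_antimono_le[of B, OF assms(1) assms(2)] .

lemma fin_support: assumes "\<And>k. B (Suc k) \<subseteq> B k" "\<And>z. \<exists>k. z \<notin> B k"
  obtains k0 where "\<And>k. k \<ge> k0 \<Longrightarrow> z \<notin> B k"
proof -
  obtain k0 where "z \<notin> B k0" using assms(2) by blast
  then have "\<And>k. k \<ge> k0 \<Longrightarrow> z \<notin> B k" using antimono_sets[of B, OF assms(1)] by blast
  then show ?thesis using that by blast
qed

lemma hh_nonneg: "hh P B k z \<ge> 0" unfolding hh_def by simp

lemma hh_summable: assumes "\<And>k. B (Suc k) \<subseteq> B k" "\<And>z. \<exists>k. z \<notin> B k"
  shows "summable (\<lambda>k. hh P B k z)"
proof -
  obtain k0 where k0: "\<And>k. k \<ge> k0 \<Longrightarrow> z \<notin> B k" using fin_support[OF assms] by blast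
  show ?thesis
  proof (rule summable_finite[of "{..<k0}"])
    fix n assume "n \<notin> {..<k0}"
    then have "z \<notin> B n" using k0 by simp
    then show "hh P B n z = 0" by (simp add: hh_def)
  qed simp
qed

lemma ff_nonneg: assumes "\<And>k. B (Suc k) \<subseteq> B k" "\<And>z. \<exists>k. z \<notin> B k"
  shows "ff P B z \<ge> 0"
  unfolding ff_def by (rule suminf_nonneg[OF hh_summable[OF assms] hh_nonneg])

lemma ff_ge_sum: assumes "\<And>k. B (Suc k) \<subseteq> B k" "\<And>z. \<exists>k. z \<notin> B k"
  shows "(\<Sum>k<K. hh P B k z) \<le> ff P B z"
  unfolding ff_def by (rule sum_le_suminf[OF hh_summable[OF assms]]) (auto simp: hh_nonneg)

lemma WW_nonneg: assumes "\<And>k. B (Suc k) \<subseteq> B k" "\<And>z. \<exists>k. z \<notin> B k"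
  shows "WW P B D j y \<ge> 0"
  unfolding WW_def using ff_nonneg[OF assms] by (simp add: sum_nonneg)

lemma uu_summable: assumes "\<And>k. D (Suc k) \<subseteq> D k" "\<And>z. \<exists>k. z \<notin> D k"
  shows "summable (\<lambda>j. if y \<in> D j then real j * WW P B D j y else 0)"
proof -
  obtain k0 where k0: "\<And>k. k \<ge> k0 \<Longrightarrow> y \<notin> D k" using fin_support[OF assms] by blast
  show ?thesis
  proof (rule summable_finite[of "{..<k0}"])
    fix n assume "n \<notin> {..<k0}"
    then have "y \<notin> D n" using k0 by simp
    then show "(if y \<in> D n then real n * WW P B D n y else 0) = 0" by simp
  qed simp
qed

lemma uu_nonneg: assumes "\<And>k. B (Suc k) \<subseteq> B k" "\<And>z. \<exists>k. z \<notin> B k"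
   "\<And>k. D (Suc k) \<subseteq> D k" "\<And>z. \<exists>k. z \<notin> D k"
  shows "uu P B D y \<ge> 0"
  unfolding uu_def
proof (rule suminf_nonneg[OF uu_summable[OF assms(3,4)]])
  fix n
  have "0 \<le> WW P B D n y" by (rule WW_nonneg[OF assms(1,2)])
  then show "0 \<le> (if y \<in> D n then real n * WW P B D n y else 0)" by simp
qed

lemma uu_ge: assumes "\<And>k. B (Suc k) \<subseteq> B k" "\<And>z. \<exists>k. z \<notin> B k"
   "\<And>k. D (Suc k) \<subseteq> D k" "\<And>z. \<exists>k. z \<notin> D k" "y \<in> D j"
  shows "real j * WW P B D j y \<le> uu P B D y"
proof -
  have "(\<Sum>i\<in>{j}. if y \<in> D i then real i * WW P B D i y else 0) \<le> uu P B D y"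
    unfolding uu_def
  proof (rule sum_le_suminf[OF uu_summable[OF assms(3,4)]])
    fix n
    have "0 \<le> WW P B D n y" by (rule WW_nonneg[OF assms(1,2)])
    then show "0 \<le> (if y \<in> D n then real n * WW P B D n y else 0)" by simp
  qed simp
  then show ?thesis using assms(5) by simp
qed

lemma uu_zero: assumes "\<And>j. y \<notin> D j" shows "uu P B D y = 0"
  unfolding uu_def using assms by simp

context
  fixes M :: "'a measure" and T :: "'a \<Rightarrow> 'a"
  assumes ps: "prob_space M" and na: "non_atomic M" and mp: "measure_preserving_map M T"
    and iv: "invertible_map M T" and eg: "ergodic_map M T"
begin

abbreviation "PP \<equiv> inv_into (space M) T"

lemma Tmeas: "T \<in> M \<rightarrow>\<^sub>M M" using mp unfolding measure_preserving_map_def by blast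
lemma Pmeas: "PP \<in> M \<rightarrow>\<^sub>M M" using iv unfolding invertible_map_def by blast
lemma Tbij: "bij_betw T (space M) (space M)" using iv unfolding invertible_map_def by blast
lemma Tsp: "x \<in> space M \<Longrightarrow> T x \<in> space M" using measurable_space[OF Tmeas] by blast
lemma Psp: "x \<in> space M \<Longrightarrow> PP x \<in> space M" using measurable_space[OF Pmeas] by blast
lemma PT: "x \<in> space M \<Longrightarrow> PP (T x) = x"
  using Tbij by (simp add: bij_betw_imp_inj_on inv_into_f_f)
lemma TP: "x \<in> space M \<Longrightarrow> T (PP x) = x"
  using Tbij by (simp add: bij_betw_inv_into_right)
lemma Tnsp: "x \<in> space M \<Longrightarrow> (T^^n) x \<in> space M"
  by (induction n) (auto simp: Tsp)
lemma Pnsp: "x \<in> space M \<Longrightarrow> (PP^^n) x \<in> space M"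
  by (induction n) (auto simp: Psp)

lemma Tpres: assumes "U \<in> sets M" shows "measure M (T -` U \<inter> space M) = measure M U"
proof -
  have "measure (distr M M T) U = measure M (T -` U \<inter> space M)" by (rule measure_distr[OF Tmeas assms])
  moreover have "distr M M T = M" using mp unfolding measure_preserving_map_def by blast
  ultimately show ?thesis by simp
qed

lemma Ppres: assumes U: "U \<in> sets M" shows "measure M (PP -` U \<inter> space M) = measure M U"
proof -
  have s: "PP -` U \<inter> space M \<in> sets M" by (rule measurable_sets[OF Pmeas U])
  have "T -` (PP -` U \<inter> space M) \<inter> space M = U"
    using PT Tsp sets.sets_into_space[OF U] by auto
  then show ?thesis using Tpres[OF s] by simp
qed

lemma Terg: "A \<in> sets M \<Longrightarrow> T -` A \<inter> space M = A \<Longrightarrow> measure M A = 0 \<or> measure M A = 1"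
  using eg unfolding ergodic_map_def by blast

lemma Perg: assumes A: "A \<in> sets M" and inv: "PP -` A \<inter> space M = A"
  shows "measure M A = 0 \<or> measure M A = 1"
proof -
  have mem: "y \<in> A \<longleftrightarrow> y \<in> space M \<and> PP y \<in> A" for y using inv by blast
  have "T -` A \<inter> space M = A"
  proof (intro equalityI subsetI)
    fix x assume "x \<in> T -` A \<inter> space M"
    then show "x \<in> A" using mem[of "T x"] PT by auto
  next
    fix x assume x: "x \<in> A"
    then have "x \<in> space M" using mem by blast
    then show "x \<in> T -` A \<inter> space M" using mem[of "T x"] PT Tsp x by auto
  qed
  then show ?thesis by (rule Terg[OF A])
qed

lemma recT: "A \<in> sets M \<Longrightarrow> measure M A > 0 \<Longrightarrow> AE x in M. \<forall>N. \<exists>n\<ge>N. (T^^n) x \<in> A"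
  by (rule recurrence[OF ps Tmeas Tpres Terg])
lemma recP: "A \<in> sets M \<Longrightarrow> measure M A > 0 \<Longrightarrow> AE x in M. \<forall>N. \<exists>n\<ge>N. (PP^^n) x \<in> A"
  by (rule recurrence[OF ps Pmeas Ppres Perg])

lemma PTn: "x \<in> space M \<Longrightarrow> m \<le> n \<Longrightarrow> (PP^^m) ((T^^n) x) = (T^^(n-m)) x"
proof (induction m)
  case 0 then show ?case by simp
next
  case (Suc m)
  then have e: "n - m = Suc (n - Suc m)" by simp
  have "(PP^^Suc m) ((T^^n) x) = PP ((T^^(n-m)) x)" using Suc by simp
  also have "\<dots> = PP (T ((T^^(n - Suc m)) x))" by (simp only: e funpow.simps o_def)
  also have "\<dots> = (T^^(n - Suc m)) x" using PT Tnsp Suc.prems(1) by blast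
  finally show ?case .
qed

lemma PTn2: "x \<in> space M \<Longrightarrow> (PP^^(q+n)) ((T^^n) x) = (PP^^q) x"
  using PTn[of x n n] by (simp add: funpow_add)

lemma Pfun_meas: "(PP^^m) \<in> M \<rightarrow>\<^sub>M M" by (rule funpow_meas[OF Pmeas])

context
  fixes B D :: "nat \<Rightarrow> 'a set"
  assumes Bs: "\<And>k. B k \<in> sets M" and Bdec: "\<And>k. B (Suc k) \<subseteq> B k" and Bne: "\<And>z. \<exists>k. z \<notin> B k"
    and Ds: "\<And>k. D k \<in> sets M" and Ddec: "\<And>k. D (Suc k) \<subseteq> D k" and Dne: "\<And>z. \<exists>k. z \<notin> D k"
    and BD: "\<And>k j z. z \<in> B k \<Longrightarrow> T z \<notin> D j"
begin

lemma predP: "A \<in> sets M \<Longrightarrow> (\<lambda>z. 1 \<le> i \<and> (PP^^i) z \<in> A) \<in> M \<rightarrow>\<^sub>M count_space UNIV"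
proof -
  assume A: "A \<in> sets M"
  have "{z\<in>space M. 1 \<le> i \<and> (PP^^i) z \<in> A} = (if 1 \<le> i then (PP^^i) -` A \<inter> space M else {})" by auto
  moreover have "(PP^^i) -` A \<inter> space M \<in> sets M" by (rule measurable_sets[OF Pfun_meas A])
  ultimately have "{z\<in>space M. 1 \<le> i \<and> (PP^^i) z \<in> A} \<in> sets M" by simp
  then show ?thesis by (simp only: pred_def)
qed

lemma leastP_meas: "A \<in> sets M \<Longrightarrow> (\<lambda>z. LEAST m. 1 \<le> m \<and> (PP^^m) z \<in> A) \<in> M \<rightarrow>\<^sub>M count_space UNIV"
  by (rule measurable_Least) (rule predP)

lemma realLeast_meas: "A \<in> sets M \<Longrightarrow> (\<lambda>z. real (LEAST m. 1 \<le> m \<and> (PP^^m) z \<in> A)) \<in> borel_measurable M"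
  by (rule measurable_compose[OF leastP_meas borel_measurable_count_space])

lemma hh_meas: "hh PP B k \<in> borel_measurable M"
proof -
  have eq: "hh PP B k = (\<lambda>z. if z \<in> B k then real (LEAST m. 1 \<le> m \<and> (PP^^m) z \<in> B k) else 0)"
    by (rule ext) (simp add: hh_def)
  have sp: "B k \<inter> space M \<in> sets M" using Bs[of k] by (metis sets.Int_space_eq2)
  show ?thesis unfolding eq
    by (rule measurable_If_set[OF realLeast_meas[OF Bs[of k]] borel_measurable_const sp])
qed

lemma ff_meas: "ff PP B \<in> borel_measurable M"
proof -
  have eq: "ff PP B = (\<lambda>z. suminf (\<lambda>k. hh PP B k z))" by (rule ext) (simp add: ff_def)
  show ?thesis unfolding eq by (rule borel_measurable_suminf[OF hh_meas])
qed

lemma WW_meas: "WW PP B D j \<in> borel_measurable M"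
proof -
  define G where "G n y = real n + (\<Sum>i<n. ff PP B ((PP^^Suc i) y))" for n y
  have G: "(\<lambda>y. G n y) \<in> borel_measurable M" for n
    unfolding G_def
    by (rule borel_measurable_add[OF borel_measurable_const borel_measurable_sum[OF measurable_compose[OF Pfun_meas ff_meas]]])
  have eq: "WW PP B D j = (\<lambda>y. G (LEAST m. 1 \<le> m \<and> (PP^^m) y \<in> D j) y)"
    by (rule ext) (simp add: WW_def G_def)
  have c: "countable (UNIV::nat set)" by simp
  show ?thesis unfolding eq
    by (rule measurable_compose_countable'[OF G leastP_meas[OF Ds[of j]] c])
qed

lemma uu_meas: "uu PP B D \<in> borel_measurable M"
proof -
  have sp: "D j \<inter> space M \<in> sets M" for j using Ds[of j] by (metis sets.Int_space_eq2)
  have t: "(\<lambda>y. if y \<in> D j then real j * WW PP B D j y else 0) \<in> borel_measurable M" for j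
    by (rule measurable_If_set[OF borel_measurable_times[OF borel_measurable_const WW_meas[of j]] borel_measurable_const sp])
  have eq: "uu PP B D = (\<lambda>y. suminf (\<lambda>j. if y \<in> D j then real j * WW PP B D j y else 0))"
    by (rule ext) (simp add: uu_def)
  show ?thesis unfolding eq by (rule borel_measurable_suminf[OF t])
qed

lemma FF_meas: "FF T PP B D \<in> borel_measurable M"
proof -
  have eq: "FF T PP B D = (\<lambda>z. ff PP B z + uu PP B D z - uu PP B D (T z))"
    by (rule ext) (simp add: FF_def)
  have "(\<lambda>z. uu PP B D (T z)) \<in> borel_measurable M"
    by (rule measurable_compose[OF Tmeas uu_meas])
  then show ?thesis unfolding eq
    by (rule borel_measurable_diff[OF borel_measurable_add[OF ff_meas uu_meas]])
qed


lemma PP_add: "(PP^^m) ((PP^^i) y) = (PP^^(i+m)) y"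
  by (metis add.commute comp_apply funpow_add)

lemma hh_orbit: "hh PP B k ((PP^^i) y) =
   (if (\<lambda>i. (PP^^i) y \<in> B k) i then real (LEAST m. 1 \<le> m \<and> (\<lambda>i. (PP^^i) y \<in> B k) (i+m)) else 0)"
  unfolding hh_def by (simp add: PP_add)

lemma back_ff:
  assumes inf: "\<forall>k N. \<exists>n\<ge>N. (PP^^n) y \<in> B k"
  shows "(\<Sum>k<K. (real n - real (nxt (\<lambda>i. (PP^^i) y \<in> B k) 0))) \<le> (\<Sum>i<n. ff PP B ((PP^^i) y))"
proof -
  have hs: "(\<Sum>i<n. hh PP B k ((PP^^i) y)) = real (nxt (\<lambda>i. (PP^^i) y \<in> B k) n) - real (nxt (\<lambda>i. (PP^^i) y \<in> B k) 0)" for k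
  proof -
    have a: "\<forall>i. \<exists>j\<ge>i. (\<lambda>i. (PP^^i) y \<in> B k) j" using inf by blast
    show ?thesis unfolding hh_orbit by (rule tele[OF a])
  qed
  have "(\<Sum>k<K. (real n - real (nxt (\<lambda>i. (PP^^i) y \<in> B k) 0)))
      \<le> (\<Sum>k<K. (real (nxt (\<lambda>i. (PP^^i) y \<in> B k) n) - real (nxt (\<lambda>i. (PP^^i) y \<in> B k) 0)))"
  proof (rule sum_mono)
    fix k
    have a: "\<forall>i. \<exists>j\<ge>i. (\<lambda>i. (PP^^i) y \<in> B k) j" using inf by blast
    show "real n - real (nxt (\<lambda>i. (PP^^i) y \<in> B k) 0) \<le> real (nxt (\<lambda>i. (PP^^i) y \<in> B k) n) - real (nxt (\<lambda>i. (PP^^i) y \<in> B k) 0)"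
      using nxt_prop(1)[OF a, of n] by simp
  qed
  also have "\<dots> = (\<Sum>k<K. \<Sum>i<n. hh PP B k ((PP^^i) y))" using hs by simp
  also have "\<dots> = (\<Sum>i<n. \<Sum>k<K. hh PP B k ((PP^^i) y))" by (rule sum.swap)
  also have "\<dots> \<le> (\<Sum>i<n. ff PP B ((PP^^i) y))"
    by (rule sum_mono) (rule ff_ge_sum[OF Bdec Bne])
  finally show ?thesis .
qed

lemma fwd_tele: "(\<Sum>i<n. FF T PP B D ((T^^i) x)) = (\<Sum>i<n. ff PP B ((T^^i) x)) + uu PP B D x - uu PP B D ((T^^n) x)"
proof -
  have "(\<Sum>i<n. FF T PP B D ((T^^i) x)) = (\<Sum>i<n. ff PP B ((T^^i) x)) + (\<Sum>i<n. uu PP B D ((T^^i) x) - uu PP B D ((T^^Suc i) x))"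
    unfolding FF_def by (simp add: sum.distrib sum_subtractf)
  also have "(\<Sum>i<n. uu PP B D ((T^^i) x) - uu PP B D ((T^^Suc i) x)) = uu PP B D x - uu PP B D ((T^^n) x)"
    using sum_lessThan_telescope'[of "\<lambda>i. uu PP B D ((T^^i) x)" n] by simp
  finally show ?thesis by simp
qed

lemma bwd_tele: assumes x: "x \<in> space M"
  shows "(\<Sum>i<Suc n. FF T PP B D ((PP^^i) x)) = (\<Sum>i<Suc n. ff PP B ((PP^^i) x)) + uu PP B D ((PP^^n) x) - uu PP B D (T x)"
proof (induction n)
  case 0 then show ?case by (simp add: FF_def)
next
  case (Suc n)
  have "T ((PP^^Suc n) x) = (PP^^n) x" using TP[OF Pnsp[OF x, of n]] by simp
  then show ?case using Suc by (simp add: FF_def)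
qed

lemma reflect1: assumes x: "x \<in> space M"
  shows "(\<Sum>i<Suc m. ff PP B ((T^^i) x)) = (\<Sum>i<Suc m. ff PP B ((PP^^i) ((T^^m) x)))"
proof -
  have "(\<Sum>i<Suc m. ff PP B ((PP^^i) ((T^^m) x))) = (\<Sum>i<Suc m. ff PP B ((T^^(m-i)) x))"
    by (rule sum.cong) (auto simp: PTn[OF x])
  also have "\<dots> = (\<Sum>i<Suc m. ff PP B ((T^^(Suc m - Suc i)) x))" by simp
  also have "\<dots> = (\<Sum>i<Suc m. ff PP B ((T^^i) x))"
    by (rule sum.nat_diff_reindex[where g="\<lambda>i. ff PP B ((T^^i) x)"])
  finally show ?thesis by simp
qed

lemma reflect2: assumes x: "x \<in> space M"
  shows "(\<Sum>i<n. ff PP B ((T^^i) x)) = (\<Sum>i<n. ff PP B ((PP^^Suc i) ((T^^n) x)))"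
proof -
  have "(\<Sum>i<n. ff PP B ((PP^^Suc i) ((T^^n) x))) = (\<Sum>i<n. ff PP B ((T^^(n - Suc i)) x))"
    by (rule sum.cong) (auto simp: PTn[OF x] simp del: funpow.simps)
  also have "\<dots> = (\<Sum>i<n. ff PP B ((T^^i) x))"
    by (rule sum.nat_diff_reindex[where g="\<lambda>i. ff PP B ((T^^i) x)"])
  finally show ?thesis by simp
qed


lemma avoid: "\<exists>J. \<forall>j\<ge>J. \<forall>i<N. (T^^i) x \<notin> D j"
proof (induction N)
  case 0 then show ?case by simp
next
  case (Suc N)
  then obtain J where J: "\<forall>j\<ge>J. \<forall>i<N. (T^^i) x \<notin> D j" by blast
  obtain k where k: "(T^^N) x \<notin> D k" using Dne by blast
  have "\<forall>j\<ge>max J k. \<forall>i<Suc N. (T^^i) x \<notin> D j"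
  proof (intro allI impI)
    fix j i assume j: "max J k \<le> j" and i: "i < Suc N"
    show "(T^^i) x \<notin> D j"
    proof (cases "i < N")
      case True then show ?thesis using J j by auto
    next
      case False then have "i = N" using i by simp
      moreover have "D j \<subseteq> D k" using antimono_sets[of D, OF Ddec] j by simp
      ultimately show ?thesis using k by blast
    qed
  qed
  then show ?case by blast
qed

lemma fwd_sup:
  assumes x: "x \<in> space M" and gB1: "\<forall>k N. \<exists>n\<ge>N. (T^^n) x \<in> B k"
    and gB2: "\<forall>k N. \<exists>n\<ge>N. (PP^^n) x \<in> B k"
  shows "\<exists>n\<ge>N. c \<le> avg_plus T (FF T PP B D) n x"
proof -
  define K where "K = nat \<lceil>c\<rceil>"
  have cK: "c \<le> real K" unfolding K_def by linarith
  obtain m where m: "m \<ge> N" "(T^^m) x \<in> B K" using gB1 by blast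
  define y where "y = (T^^m) x"
  have yinf: "\<forall>k N'. \<exists>p\<ge>N'. (PP^^p) y \<in> B k"
  proof (intro allI)
    fix k N'
    obtain q where q: "q \<ge> N'" "(PP^^q) x \<in> B k" using gB2 by blast
    have "(PP^^(q+m)) y = (PP^^q) x" unfolding y_def by (rule PTn2[OF x])
    then show "\<exists>p\<ge>N'. (PP^^p) y \<in> B k" using q by (intro exI[of _ "q+m"]) auto
  qed
  have nxt0: "nxt (\<lambda>i. (PP^^i) y \<in> B k) 0 = 0" if "k < K" for k
  proof -
    have a: "\<forall>i. \<exists>j\<ge>i. (\<lambda>i. (PP^^i) y \<in> B k) j" using yinf by blast
    have "y \<in> B k" using antimono_sets[of B, OF Bdec, of k K] that m(2) y_def by auto
    then have "nxt (\<lambda>i. (PP^^i) y \<in> B k) 0 \<le> 0" using nxt_prop(3)[OF a, of 0 0] by simp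
    then show ?thesis by simp
  qed
  have "(\<Sum>k<K. (real (Suc m) - real (nxt (\<lambda>i. (PP^^i) y \<in> B k) 0))) = (\<Sum>k<K. real (Suc m))"
    by (rule sum.cong) (auto simp: nxt0)
  then have s1: "real K * real (Suc m) \<le> (\<Sum>i<Suc m. ff PP B ((PP^^i) y))"
    using back_ff[OF yinf, where K=K and n="Suc m"] by simp
  have s2: "(\<Sum>i<Suc m. ff PP B ((T^^i) x)) = (\<Sum>i<Suc m. ff PP B ((PP^^i) y))"
    unfolding y_def by (rule reflect1[OF x])
  have u0: "uu PP B D ((T^^Suc m) x) = 0"
    by (rule uu_zero) (use BD m(2) in simp)
  have ux: "uu PP B D x \<ge> 0" by (rule uu_nonneg[OF Bdec Bne Ddec Dne])
  have "real K * real (Suc m) \<le> (\<Sum>i<Suc m. FF T PP B D ((T^^i) x))"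
    using fwd_tele[where n="Suc m" and x=x] s1 s2 u0 ux by linarith
  then have "real K \<le> avg_plus T (FF T PP B D) (Suc m) x"
    unfolding avg_plus_def by (simp add: pos_le_divide_eq)
  then show ?thesis using cK m(1) by (intro exI[of _ "Suc m"]) auto
qed

lemma fwd_inf:
  assumes x: "x \<in> space M"
    and gD1: "\<forall>j N. \<exists>n\<ge>N. (T^^n) x \<in> D j" and gD2: "\<forall>j N. \<exists>n\<ge>N. (PP^^n) x \<in> D j"
  shows "\<exists>n\<ge>N. avg_plus T (FF T PP B D) n x \<le> c"
proof -
  obtain J where J: "\<forall>j\<ge>J. \<forall>i<N. (T^^i) x \<notin> D j" using avoid by blast
  define j where "j = max (max J 1) (nat \<lceil>uu PP B D x - c\<rceil> + 1)"
  have j1: "j \<ge> 1" "j \<ge> J" unfolding j_def by auto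
  have jc: "real j \<ge> uu PP B D x - c + 1" unfolding j_def by linarith
  obtain n0 where n0: "n0 \<ge> 1" "(T^^n0) x \<in> D j" using gD1 by blast
  define \<tau> where "\<tau> = (LEAST n. 1 \<le> n \<and> (T^^n) x \<in> D j)"
  have \<tau>: "1 \<le> \<tau>" "(T^^\<tau>) x \<in> D j"
    using LeastI[of "\<lambda>n. 1 \<le> n \<and> (T^^n) x \<in> D j" n0] n0 unfolding \<tau>_def by auto
  have \<tau>min: "\<tau> \<le> n" if "1 \<le> n" "(T^^n) x \<in> D j" for n
    unfolding \<tau>_def by (rule Least_le) (use that in simp)
  have \<tau>N: "\<tau> \<ge> N"
  proof (rule ccontr)
    assume "\<not> \<tau> \<ge> N" then have "\<tau> < N" by simp
    then show False using J j1(2) \<tau>(2) by blast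
  qed
  define y where "y = (T^^\<tau>) x"
  obtain q where q: "q \<ge> 1" "(PP^^q) x \<in> D j" using gD2 by blast
  have q2: "(PP^^(q+\<tau>)) y = (PP^^q) x" unfolding y_def by (rule PTn2[OF x])
  define m where "m = (LEAST m. 1 \<le> m \<and> (PP^^m) y \<in> D j)"
  have mP: "1 \<le> m" "(PP^^m) y \<in> D j"
    using LeastI[of "\<lambda>m. 1 \<le> m \<and> (PP^^m) y \<in> D j" "q+\<tau>"] q q2 unfolding m_def by auto
  have m\<tau>: "\<tau> \<le> m"
  proof (rule ccontr)
    assume "\<not> \<tau> \<le> m" then have lt: "m < \<tau>" by simp
    have "(PP^^m) y = (T^^(\<tau> - m)) x" unfolding y_def using PTn[OF x, of m \<tau>] lt by simp
    then have "(T^^(\<tau> - m)) x \<in> D j" using mP by simp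
    then have "\<tau> \<le> \<tau> - m" using \<tau>min[of "\<tau> - m"] lt by simp
    then show False using mP(1) lt by simp
  qed
  define S where "S = (\<Sum>i<\<tau>. ff PP B ((T^^i) x))"
  have S0: "S \<ge> 0" unfolding S_def by (rule sum_nonneg) (rule ff_nonneg[OF Bdec Bne])
  have "S = (\<Sum>i<\<tau>. ff PP B ((PP^^Suc i) y))" unfolding S_def y_def by (rule reflect2[OF x])
  also have "\<dots> \<le> (\<Sum>i<m. ff PP B ((PP^^Suc i) y))"
    by (rule sum_mono2) (use m\<tau> ff_nonneg[OF Bdec Bne] in auto)
  finally have Sm: "S \<le> (\<Sum>i<m. ff PP B ((PP^^Suc i) y))" .
  have WW: "WW PP B D j y = real m + (\<Sum>i<m. ff PP B ((PP^^Suc i) y))"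
    unfolding WW_def m_def ..
  have "real \<tau> + S \<le> WW PP B D j y" using WW Sm m\<tau> by simp
  then have "real j * (real \<tau> + S) \<le> real j * WW PP B D j y" by (rule mult_left_mono) simp
  also have "\<dots> \<le> uu PP B D y" by (rule uu_ge[OF Bdec Bne Ddec Dne]) (use \<tau>(2) y_def in simp)
  finally have uy: "real j * (real \<tau> + S) \<le> uu PP B D y" .
  have "S \<le> real j * S" using S0 j1(1) by (simp add: mult_le_cancel_right1)
  then have uy2: "real j * real \<tau> + S \<le> uu PP B D y" using uy by (simp add: distrib_left)
  have sumF: "(\<Sum>i<\<tau>. FF T PP B D ((T^^i) x)) \<le> uu PP B D x - real j * real \<tau>"
    using fwd_tele[where n=\<tau> and x=x] uy2 unfolding S_def y_def by linarith
  have ux: "uu PP B D x \<ge> 0" by (rule uu_nonneg[OF Bdec Bne Ddec Dne])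
  have pos: "c + real j > 0" using jc ux by linarith
  have "(c + real j) * 1 \<le> (c + real j) * real \<tau>" by (rule mult_left_mono) (use \<tau>(1) pos in auto)
  then have "uu PP B D x - real j * real \<tau> \<le> c * real \<tau>" using jc by (simp add: algebra_simps)
  then have "(\<Sum>i<\<tau>. FF T PP B D ((T^^i) x)) \<le> c * real \<tau>" using sumF by linarith
  then have "avg_plus T (FF T PP B D) \<tau> x \<le> c"
    unfolding avg_plus_def using \<tau>(1) by (simp add: pos_divide_le_eq)
  then show ?thesis using \<tau>N by blast
qed

lemma bwd_lim:
  assumes x: "x \<in> space M" and gB2: "\<forall>k N. \<exists>n\<ge>N. (PP^^n) x \<in> B k"
  shows "filterlim (\<lambda>n. avg_minus M T (FF T PP B D) n x) at_top sequentially"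
  unfolding filterlim_at_top
proof
  fix Z :: real
  define K where "K = nat \<lceil>Z\<rceil> + 1"
  have ZK: "Z \<le> real K - 1" unfolding K_def by linarith
  define C where "C = (\<Sum>k<K. real (nxt (\<lambda>i. (PP^^i) x \<in> B k) 0)) + uu PP B D (T x)"
  have C0: "C \<ge> 0" unfolding C_def using uu_nonneg[OF Bdec Bne Ddec Dne] by (simp add: sum_nonneg)
  show "eventually (\<lambda>n. Z \<le> avg_minus M T (FF T PP B D) n x) sequentially"
    unfolding eventually_sequentially
  proof (intro exI[of _ "nat \<lceil>C\<rceil> + 1"] allI impI)
    fix n assume n: "nat \<lceil>C\<rceil> + 1 \<le> n"
    then obtain m where nm: "n = Suc m" by (cases n) auto
    have Cn: "C \<le> real n" using n by linarith
    have b: "(\<Sum>k<K. (real n - real (nxt (\<lambda>i. (PP^^i) x \<in> B k) 0))) \<le> (\<Sum>i<n. ff PP B ((PP^^i) x))"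
      by (rule back_ff[OF gB2])
    have "(\<Sum>k<K. (real n - real (nxt (\<lambda>i. (PP^^i) x \<in> B k) 0)))
       = real K * real n - (\<Sum>k<K. real (nxt (\<lambda>i. (PP^^i) x \<in> B k) 0))"
      by (simp add: sum_subtractf)
    then have b2: "real K * real n - C \<le> (\<Sum>i<n. FF T PP B D ((PP^^i) x))"
      using b bwd_tele[OF x, of m] uu_nonneg[OF Bdec Bne Ddec Dne, of PP "(PP^^m) x"] nm
      unfolding C_def by simp
    have "Z * real n \<le> (real K - 1) * real n" by (rule mult_right_mono[OF ZK]) simp
    then have "Z * real n \<le> (\<Sum>i<n. FF T PP B D ((PP^^i) x))" using b2 Cn by (simp add: algebra_simps)
    then show "Z \<le> avg_minus M T (FF T PP B D) n x"
      unfolding avg_minus_def using nm by (simp add: pos_le_divide_eq)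
  qed
qed

end

end


lemma limsup_inf:
  fixes X :: "nat \<Rightarrow> real"
  assumes H: "\<And>c N. \<exists>n\<ge>N. c \<le> X n"
  shows "limsup (\<lambda>n. ereal (X n)) = \<infinity>"
proof (rule ccontr)
  assume "limsup (\<lambda>n. ereal (X n)) \<noteq> \<infinity>"
  then obtain r :: nat where "limsup (\<lambda>n. ereal (X n)) < ereal (real r)"
    using less_PInf_Ex_of_nat by blast
  then have "eventually (\<lambda>n. ereal (X n) < ereal (real r)) sequentially" by (rule Limsup_lessD)
  then obtain N where N: "\<forall>n\<ge>N. X n < real r" by (auto simp: eventually_sequentially)
  obtain n where "n \<ge> N" "real r \<le> X n" using H by blast
  then show False using N by force
qed

lemma liminf_minf:
  fixes X :: "nat \<Rightarrow> real"
  assumes H: "\<And>c N. \<exists>n\<ge>N. X n \<le> c"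
  shows "liminf (\<lambda>n. ereal (X n)) = -\<infinity>"
proof (rule ccontr)
  assume A: "liminf (\<lambda>n. ereal (X n)) \<noteq> -\<infinity>"
  have "\<exists>r. ereal r < liminf (\<lambda>n. ereal (X n))"
  proof (cases "liminf (\<lambda>n. ereal (X n))" rule: ereal_cases)
    case (real s) then show ?thesis by (intro exI[of _ "s - 1"]) simp
  next
    case PInf then show ?thesis by (intro exI[of _ 0]) simp
  next
    case MInf then show ?thesis using A by simp
  qed
  then obtain r where "ereal r < liminf (\<lambda>n. ereal (X n))" by blast
  then have "eventually (\<lambda>n. ereal r < ereal (X n)) sequentially" by (rule less_LiminfD)
  then obtain N where N: "\<forall>n\<ge>N. r < X n" by (auto simp: eventually_sequentially)
  obtain n where "n \<ge> N" "X n \<le> r" using H by blast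
  then show False using N by force
qed

theorem proposition1:
  fixes M :: "'a measure" and T :: "'a \<Rightarrow> 'a"
  assumes "prob_space M"
    and "non_atomic M"
    and "measure_preserving_map M T"
    and "invertible_map M T"
    and "ergodic_map M T"
  shows "\<exists>f :: 'a \<Rightarrow> real. f \<in> borel_measurable M \<and>
    (AE x in M.
       limsup (\<lambda>n. ereal (avg_plus T f n x)) = \<infinity> \<and>
       liminf (\<lambda>n. ereal (avg_plus T f n x)) = -\<infinity> \<and>
       filterlim (\<lambda>n. avg_minus M T f n x) at_top sequentially)"
proof -
  interpret prob_space M by (rule assms(1))
  note A = assms
  have sp1: "measure M (space M) = 1" by (rule prob_space)
  have "\<exists>B\<in>sets M. B \<subseteq> space M \<and> 0 < measure M B \<and> measure M B < measure M (space M)"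
  proof -
    have "0 < measure M (space M) \<longrightarrow> (\<exists>B\<in>sets M. B \<subseteq> space M \<and> 0 < measure M B \<and> measure M B < measure M (space M))"
      using assms(2) sets.top[of M] unfolding non_atomic_def by (rule bspec)
    then show ?thesis using sp1 by simp
  qed
  then obtain D0 where D0: "D0 \<in> sets M" "D0 \<subseteq> space M" "0 < measure M D0" "measure M D0 < 1"
    using sp1 by auto
  define B0 where "B0 = T -` (space M - D0) \<inter> space M"
  have cs: "space M - D0 \<in> sets M" using D0(1) by blast
  have B0s: "B0 \<in> sets M" unfolding B0_def by (rule measurable_sets[OF Tmeas[OF A] cs])
  have "measure M B0 = measure M (space M - D0)" unfolding B0_def by (rule Tpres[OF A cs])
  also have "\<dots> = 1 - measure M D0" by (rule prob_compl[OF D0(1)])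
  finally have B0pos: "measure M B0 > 0" using D0(4) by simp
  obtain B where B: "\<forall>k. B k \<in> sets M \<and> B k \<subseteq> B0 \<and> 0 < measure M (B k) \<and> B (Suc k) \<subseteq> B k"
      "\<forall>z. \<exists>k. z \<notin> B k"
    using dec_seq[OF assms(1,2) B0s B0pos] by blast
  obtain D where D: "\<forall>k. D k \<in> sets M \<and> D k \<subseteq> D0 \<and> 0 < measure M (D k) \<and> D (Suc k) \<subseteq> D k"
      "\<forall>z. \<exists>k. z \<notin> D k"
    using dec_seq[OF assms(1,2) D0(1) D0(3)] by blast
  have Bs: "\<And>k. B k \<in> sets M" and Bdec: "\<And>k. B (Suc k) \<subseteq> B k" and Bne: "\<And>z. \<exists>k. z \<notin> B k"
    using B by auto
  have Ds: "\<And>k. D k \<in> sets M" and Ddec: "\<And>k. D (Suc k) \<subseteq> D k" and Dne: "\<And>z. \<exists>k. z \<notin> D k"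
    using D by auto
  have Bpos: "\<And>k. 0 < measure M (B k)" using B by blast
  have Dpos: "\<And>k. 0 < measure M (D k)" using D by blast
  have BD: "\<And>k j z. z \<in> B k \<Longrightarrow> T z \<notin> D j"
  proof -
    fix k j z assume "z \<in> B k"
    then have "z \<in> B0" using B by blast
    then have "T z \<notin> D0" unfolding B0_def by blast
    then show "T z \<notin> D j" using D by blast
  qed
  let ?F = "FF T (inv_into (space M) T) B D"
  have meas: "?F \<in> borel_measurable M"
    by (rule FF_meas[OF A Bs Bdec Bne Ds Ddec Dne BD])
  have aeB1: "AE x in M. \<forall>k N. \<exists>n\<ge>N. (T^^n) x \<in> B k"
    by (subst AE_all_countable) (intro allI recT[OF A] Bs Bpos)
  have aeB2: "AE x in M. \<forall>k N. \<exists>n\<ge>N. (inv_into (space M) T ^^n) x \<in> B k"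
    by (subst AE_all_countable) (intro allI recP[OF A] Bs Bpos)
  have aeD1: "AE x in M. \<forall>k N. \<exists>n\<ge>N. (T^^n) x \<in> D k"
    by (subst AE_all_countable) (intro allI recT[OF A] Ds Dpos)
  have aeD2: "AE x in M. \<forall>k N. \<exists>n\<ge>N. (inv_into (space M) T ^^n) x \<in> D k"
    by (subst AE_all_countable) (intro allI recP[OF A] Ds Dpos)
  have "AE x in M.
       limsup (\<lambda>n. ereal (avg_plus T ?F n x)) = \<infinity> \<and>
       liminf (\<lambda>n. ereal (avg_plus T ?F n x)) = -\<infinity> \<and>
       filterlim (\<lambda>n. avg_minus M T ?F n x) at_top sequentially"
    using aeB1 aeB2 aeD1 aeD2 AE_space
  proof eventually_elim
    case (elim x)
    then have x: "x \<in> space M" by blast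
    show ?case
    proof (intro conjI)
      show "limsup (\<lambda>n. ereal (avg_plus T ?F n x)) = \<infinity>"
        by (rule limsup_inf) (rule fwd_sup[OF A Bs Bdec Bne Ds Ddec Dne BD x elim(1) elim(2)])
      show "liminf (\<lambda>n. ereal (avg_plus T ?F n x)) = -\<infinity>"
        by (rule liminf_minf) (rule fwd_inf[OF A Bs Bdec Bne Ds Ddec Dne BD x elim(3) elim(4)])
      show "filterlim (\<lambda>n. avg_minus M T ?F n x) at_top sequentially"
        by (rule bwd_lim[OF A Bs Bdec Bne Ds Ddec Dne BD x elim(2)])
    qed
  qed
  then show ?thesis using meas by blast
qed


end
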